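(* Let $G$ be a finite simple graph with at least two vertices and maximum degree $k$, regarded as a slim Hoffman graph. Then $G$ is $(-k)$-reducible.
   Context: A Hoffman graph $\mathfrak{H}$ is a finite simple graph $H$ together with a labeling of each vertex as slim or fat, such that every fat vertex is adjacent to at least one slim vertex and the fat vertices are pairwise non-adjacent. $V^s(\mathfrak{H})$, $V^f(\mathfrak{H})$ denote the sets of slim and fat vertices; for a vertex $x$, $N^f_{\mathfrak{H}}(x)$ denotes the set of fat neighbours of $x$. $\mathfrak{H}$ is slim if it has no fat vertices; an ordinary graph is identified with a slim Hoffman graph. An induced Hoffman subgraph of $\mathfrak{H}$ is a Hoffman graph whose underlying graph is an induced subgraph of $H$, with the inherited labels. Writing the adjacency matrix of $H$ with fat vertices last as $\begin{pmatrix}A_s & C\\ C^T & O\end{pmatrix}$, set $B(\mathfrak{H})=A_s-CC^T$ (rows/columns indexed by slim vertices); $\lambda_{\min}(\mathfrak{H})$ is the smallest eigenvalue of $B(\mathfrak{H})$. A decomposition of $\mathfrak{H}$ is a family $\{\mathfrak{H}^i\}_{i=1}^n$ of induced Hoffman subgraphs such that: (i) $V(\mathfrak{H})=\bigcup_i V(\mathfrak{H}^i)$; (ii) $V^s(\mathfrak{H}^i)\cap V^s(\mathfrak{H}^j)=\emptyset$ for $i\ne j$; (iii) if $x\in V^s(\mathfrak{H}^i)$ and $y$ is a fat neighbour of $x$ in $\mathfrak{H}$, then $y\in V(\mathfrak{H}^i)$; (iv) if $x\in V^s(\mathfrak{H}^i)$, $y\in V^s(\mathfrak{H}^j)$, $i\neq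 j$, then $|N^f_{\mathfrak{H}}(x)\cap N^f_{\mathfrak{H}}(y)|\le 1$, with equality if and only if $x,y$ are adjacent. For a real $\alpha<0$, a Hoffman graph $\mathfrak{H}$ with $\lambda_{\min}(\mathfrak{H})\ge\alpha$ is $\alpha$-reducible if there exist a Hoffman graph $\mathfrak{H}'$ containing $\mathfrak{H}$ as an induced Hoffman subgraph and a decomposition $\{\mathfrak{H}^1,\mathfrak{H}^2\}$ of $\mathfrak{H}'$ with $\lambda_{\min}(\mathfrak{H}^i)\ge\alpha$ and $V^s(\mathfrak{H}^i)\cap V^s(\mathfrak{H})\ne\emptyset$ for $i=1,2$. *)

theory Defs
  imports Complex_Main
begin

record 'a hgraph =
  hV :: "'a set"
  hE :: "'a \<Rightarrow> 'a \<Rightarrow> bool"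
  hF :: "'a set"

definition slim :: "('a, 'b) hgraph_scheme \<Rightarrow> 'a set" where
  "slim H = hV H - hF H"

definition fat_nbrs :: "('a, 'b) hgraph_scheme \<Rightarrow> 'a \<Rightarrow> 'a set" where
  "fat_nbrs H x = {y \<in> hF H. hE H x y}"

definition hoffman_graph :: "'a hgraph \<Rightarrow> bool" where
  "hoffman_graph H \<longleftrightarrow>
     finite (hV H) \<and> hF H \<subseteq> hV H \<and>
     (\<forall>x y. hE H x y \<longrightarrow> x \<in> hV H \<and> y \<in> hV H) \<and>
     (\<forall>x y. hE H x y \<longrightarrow> hE H y x) \<and>
     (\<forall>x. \<not> hE H x x) \<and>
     (\<forall>f\<in>hF H. \<exists>s\<in>slim H. hE H f s) \<and>
     (\<forall>f\<in>hF H. \<forall>g\<in>hF H. \<not> hE H f g)"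

definition induced :: "'a hgraph \<Rightarrow> 'a set \<Rightarrow> 'a hgraph" where
  "induced H U = \<lparr>hV = U, hE = (\<lambda>x y. hE H x y \<and> x \<in> U \<and> y \<in> U), hF = hF H \<inter> U\<rparr>"

definition induced_sub :: "'a hgraph \<Rightarrow> 'a hgraph \<Rightarrow> bool" where
  "induced_sub K H \<longleftrightarrow> hoffman_graph K \<and> hV K \<subseteq> hV H \<and> K = induced H (hV K)"

text \<open>The matrix B(H) = A_s - C C^T, indexed by slim vertices.\<close>
definition Bmat :: "'a hgraph \<Rightarrow> 'a \<Rightarrow> 'a \<Rightarrow> real" where
  "Bmat H x y = (if hE H x y then 1 else 0) - real (card (fat_nbrs H x \<inter> fat_nbrs H y))"

definition is_eigenvalue :: "('a \<Rightarrow> 'a \<Rightarrow> real) \<Rightarrow> 'a set \<Rightarrow> real \<Rightarrow> bool" where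
  "is_eigenvalue M S \<mu> \<longleftrightarrow>
     (\<exists>v :: 'a \<Rightarrow> real. (\<exists>i\<in>S. v i \<noteq> 0) \<and> (\<forall>i\<in>S. (\<Sum>j\<in>S. M i j * v j) = \<mu> * v i))"

text \<open>Smallest eigenvalue of B(H) (B(H) is real symmetric, so all eigenvalues are real).\<close>
definition lambda_min :: "'a hgraph \<Rightarrow> real" where
  "lambda_min H = Min {\<mu>. is_eigenvalue (Bmat H) (slim H) \<mu>}"

definition decomposition :: "'a hgraph \<Rightarrow> 'i set \<Rightarrow> ('i \<Rightarrow> 'a hgraph) \<Rightarrow> bool" where
  "decomposition H I Hs \<longleftrightarrow>
     finite I \<and>
     (\<forall>i\<in>I. induced_sub (Hs i) H) \<and>
     hV H = (\<Union>i\<in>I. hV (Hs i)) \<and>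
     (\<forall>i\<in>I. \<forall>j\<in>I. i \<noteq> j \<longrightarrow> slim (Hs i) \<inter> slim (Hs j) = {}) \<and>
     (\<forall>i\<in>I. \<forall>x\<in>slim (Hs i). fat_nbrs H x \<subseteq> hV (Hs i)) \<and>
     (\<forall>i\<in>I. \<forall>j\<in>I. i \<noteq> j \<longrightarrow> (\<forall>x\<in>slim (Hs i). \<forall>y\<in>slim (Hs j).
         card (fat_nbrs H x \<inter> fat_nbrs H y) \<le> 1 \<and>
         (card (fat_nbrs H x \<inter> fat_nbrs H y) = 1 \<longleftrightarrow> hE H x y)))"

definition hmap :: "('a \<Rightarrow> 'b) \<Rightarrow> 'a hgraph \<Rightarrow> 'b hgraph" where
  "hmap f H = \<lparr>hV = f ` hV H, hE = (\<lambda>x y. \<exists>a b. x = f a \<and> y = f b \<and> hE H a b),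
               hF = f ` hF H\<rparr>"

text \<open>alpha-reducibility. The ambient graph H' lives on the vertex type 'a + nat, with H
  embedded via Inl (new vertices are taken from Inr).\<close>
definition reducible :: "real \<Rightarrow> 'a hgraph \<Rightarrow> bool" where
  "reducible \<alpha> H \<longleftrightarrow>
     lambda_min H \<ge> \<alpha> \<and>
     (\<exists>(H' :: ('a + nat) hgraph) (H1 :: ('a + nat) hgraph) H2.
        hoffman_graph H' \<and> induced_sub (hmap Inl H) H' \<and>
        decomposition H' {1::nat, 2} (\<lambda>i. if i = 1 then H1 else H2) \<and>
        lambda_min H1 \<ge> \<alpha> \<and> lambda_min H2 \<ge> \<alpha> \<and>
        slim H1 \<inter> slim (hmap Inl H) \<noteq> {} \<and> slim H2 \<inter> slim (hmap Inl H) \<noteq> {})"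

definition degree :: "'a hgraph \<Rightarrow> 'a \<Rightarrow> nat" where
  "degree H v = card {w \<in> hV H. hE H v w}"

definition max_degree :: "'a hgraph \<Rightarrow> nat" where
  "max_degree H = Max (degree H ` hV H)"

end

theory Submission imports Defs "Jordan_Normal_Form.Spectral_Radius" begin


lemma sym_real_eig:
  fixes A :: "real mat"
  assumes A: "A \<in> carrier_mat n n" and n: "n > 0"
    and sym: "\<And>i j. i<n \<Longrightarrow> j<n \<Longrightarrow> A$$(i,j) = A$$(j,i)"
  shows "\<exists>r. eigenvalue A r"
proof -
  define Ac where "Ac = map_mat complex_of_real A"
  have Ac: "Ac \<in> carrier_mat n n" using A by (simp add: Ac_def)
  from spectrum_non_empty[OF Ac n] obtain \<mu> where ev: "eigenvalue Ac \<mu>" by (auto simp: spectrum_def)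
  then obtain v where v: "v \<in> carrier_vec n" "v \<noteq> 0\<^sub>v n" "Ac *\<^sub>v v = \<mu> \<cdot>\<^sub>v v"
    unfolding eigenvalue_def eigenvector_def using Ac by auto
  have comp: "(\<Sum>j<n. of_real (A$$(i,j)) * v$j) = \<mu> * v$i" if i: "i<n" for i
  proof -
    have "(Ac *\<^sub>v v)$i = \<mu> * v$i" using v(3) i v(1) by (metis carrier_vecD index_smult_vec(1))
    moreover have "(Ac *\<^sub>v v)$i = (\<Sum>j<n. of_real (A$$(i,j)) * v$j)"
      using i Ac A v(1) by (auto simp: Ac_def scalar_prod_def lessThan_atLeast0 intro!: sum.cong)
    ultimately show ?thesis by simp
  qed
  from v(1,2) obtain i0 where i0: "i0 < n" "v $ i0 \<noteq> 0" by force
  define t where "t = (\<Sum>i<n. (cmod (v$i))^2)"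
  have "(cmod (v$i0))^2 \<le> t" unfolding t_def
    by (rule member_le_sum) (use i0 in auto)
  moreover have "(cmod (v$i0))^2 > 0" using i0 by simp
  ultimately have tpos: "t > 0" by linarith
  define s where "s = (\<Sum>i<n. \<Sum>j<n. cnj (v$i) * of_real (A$$(i,j)) * v$j)"
  have "s = (\<Sum>i<n. cnj (v$i) * (\<Sum>j<n. of_real (A$$(i,j)) * v$j))"
    unfolding s_def by (simp add: sum_distrib_left mult.assoc)
  also have "\<dots> = (\<Sum>i<n. \<mu> * (v$i * cnj (v$i)))" by (rule sum.cong) (auto simp: comp)
  also have "\<dots> = \<mu> * of_real t" unfolding t_def
    by (simp add: sum_distrib_left flip: complex_norm_square)
  finally have s1: "s = \<mu> * of_real t" .
  have "cnj s = (\<Sum>i<n. \<Sum>j<n. v$i * of_real (A$$(i,j)) * cnj (v$j))"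
    unfolding s_def by (simp add: cnj_sum)
  also have "\<dots> = (\<Sum>j<n. \<Sum>i<n. v$i * of_real (A$$(i,j)) * cnj (v$j))" by (rule sum.swap)
  also have "\<dots> = s" unfolding s_def
    by (intro sum.cong refl) (auto simp: sym mult.commute mult.left_commute)
  finally have "cnj s = s" .
  with s1 have "cnj \<mu> * of_real t = \<mu> * of_real t" by simp
  with tpos have "cnj \<mu> = \<mu>" by simp
  hence real: "\<mu> = of_real (Re \<mu>)" by (metis Reals_cnj_iff of_real_Re)
  have "poly (char_poly Ac) \<mu> = 0" using ev eigenvalue_root_char_poly[OF Ac] by simp
  moreover have "char_poly Ac = map_poly of_real (char_poly A)"
    unfolding Ac_def using of_real_hom.char_poly_hom[OF A] by simp
  ultimately have "poly (map_poly of_real (char_poly A)) (of_real (Re \<mu>)) = (0::complex)"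
    using real by simp
  hence "poly (char_poly A) (Re \<mu>) = 0" by (simp add: of_real_hom.poly_map_poly)
  thus ?thesis using eigenvalue_root_char_poly[OF A] by blast
qed


lemma sum_nth_distinct:
  assumes "distinct xs"
  shows "(\<Sum>j<length xs. f (xs!j)) = sum f (set xs)"
proof -
  have "set xs = (!) xs ` {..<length xs}" by (auto simp: in_set_conv_nth)
  hence "sum f (set xs) = sum f ((!) xs ` {..<length xs})" by simp
  also have "\<dots> = (\<Sum>j<length xs. f (xs!j))"
    by (subst sum.reindex) (auto intro: inj_on_nth assms)
  finally show ?thesis by simp
qed

lemma eig_bridge:
  fixes M :: "'a \<Rightarrow> 'a \<Rightarrow> real"
  assumes d: "distinct xs"
  defines "n \<equiv> length xs"
  defines "A \<equiv> mat n n (\<lambda>(i,j). M (xs!i) (xs!j))"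
  shows "is_eigenvalue M (set xs) \<mu> \<longleftrightarrow> eigenvalue A \<mu>"
proof
  assume "is_eigenvalue M (set xs) \<mu>"
  then obtain v where v: "\<exists>i\<in>set xs. v i \<noteq> 0"
    "\<forall>i\<in>set xs. (\<Sum>j\<in>set xs. M i j * v j) = \<mu> * v i" unfolding is_eigenvalue_def by blast
  define w where "w = vec n (\<lambda>i. v (xs!i))"
  from v(1) obtain k where k: "k < n" "v (xs!k) \<noteq> 0" unfolding n_def by (auto simp: in_set_conv_nth)
  have w1: "w \<in> carrier_vec n" unfolding w_def by simp
  have w2: "w \<noteq> 0\<^sub>v n" using k unfolding w_def by (metis index_vec index_zero_vec(1))
  have w3: "A *\<^sub>v w = \<mu> \<cdot>\<^sub>v w"
  proof (rule eq_vecI)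
    fix i assume "i < dim_vec (\<mu> \<cdot>\<^sub>v w)"
    hence i: "i < n" unfolding w_def by simp
    have "(A *\<^sub>v w) $ i = (\<Sum>j<n. M (xs!i) (xs!j) * v (xs!j))"
      using i unfolding A_def w_def by (auto simp: scalar_prod_def lessThan_atLeast0 intro!: sum.cong)
    also have "\<dots> = (\<Sum>j\<in>set xs. M (xs!i) j * v j)" unfolding n_def
      by (rule sum_nth_distinct[OF d, of "\<lambda>j. M (xs!i) j * v j"])
    also have "\<dots> = \<mu> * v (xs!i)" using v(2) i unfolding n_def by auto
    finally show "(A *\<^sub>v w) $ i = (\<mu> \<cdot>\<^sub>v w) $ i" using i unfolding w_def by simp
  qed (simp add: A_def w_def)
  show "eigenvalue A \<mu>" unfolding eigenvalue_def eigenvector_def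
    using w1 w2 w3 by (intro exI[of _ w]) (simp add: A_def)
next
  assume "eigenvalue A \<mu>"
  then obtain w where w: "w \<in> carrier_vec n" "w \<noteq> 0\<^sub>v n" "A *\<^sub>v w = \<mu> \<cdot>\<^sub>v w"
    unfolding eigenvalue_def eigenvector_def A_def by auto
  define v where "v a = w $ (the_inv_into {..<n} ((!) xs) a)" for a
  have inj: "inj_on ((!) xs) {..<n}" unfolding n_def by (rule inj_on_nth[OF d]) auto
  have vk: "v (xs!k) = w $ k" if "k < n" for k
    unfolding v_def using the_inv_into_f_f[OF inj] that by simp
  from w(1,2) obtain k where k: "k < n" "w $ k \<noteq> 0" by force
  show "is_eigenvalue M (set xs) \<mu>" unfolding is_eigenvalue_def
  proof (intro exI[of _ v] conjI ballI)
    show "\<exists>i\<in>set xs. v i \<noteq> 0" using k vk unfolding n_def by (metis nth_mem)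
  next
    fix a assume "a \<in> set xs"
    then obtain i where i: "i < n" "a = xs!i" unfolding n_def by (auto simp: in_set_conv_nth)
    have "(\<Sum>j\<in>set xs. M a j * v j) = (\<Sum>j<n. M (xs!i) (xs!j) * v (xs!j))"
      unfolding n_def i(2) by (rule sum_nth_distinct[OF d, symmetric])
    also have "\<dots> = (\<Sum>j<n. M (xs!i) (xs!j) * w $ j)" by (rule sum.cong) (auto simp: vk)
    also have "\<dots> = (A *\<^sub>v w) $ i"
      using i w(1) unfolding A_def by (auto simp: scalar_prod_def lessThan_atLeast0 intro!: sum.cong)
    also have "\<dots> = \<mu> * w $ i" using w(1,3) i by (metis carrier_vecD index_smult_vec(1))
    finally show "(\<Sum>j\<in>set xs. M a j * v j) = \<mu> * v a" using vk i by simp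
  qed
qed

lemma eig_fin_ne:
  fixes M :: "'a \<Rightarrow> 'a \<Rightarrow> real"
  assumes fin: "finite S" and ne: "S \<noteq> {}" and sym: "\<forall>i\<in>S. \<forall>j\<in>S. M i j = M j i"
  shows "finite {\<mu>. is_eigenvalue M S \<mu>} \<and> {\<mu>. is_eigenvalue M S \<mu>} \<noteq> {}"
proof -
  obtain xs where xs: "set xs = S" "distinct xs" using finite_distinct_list[OF fin] by blast
  define n where "n = length xs"
  define A where "A = mat n n (\<lambda>(i,j). M (xs!i) (xs!j))"
  have A: "A \<in> carrier_mat n n" unfolding A_def by simp
  have eq: "{\<mu>. is_eigenvalue M S \<mu>} = spectrum A"
    unfolding spectrum_def A_def n_def using eig_bridge[OF xs(2)] xs(1) by auto
  have npos: "n > 0" using ne xs(1) unfolding n_def by auto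
  have "\<exists>r. eigenvalue A r"
    by (rule sym_real_eig[OF A npos]) (use sym xs(1) in \<open>auto simp: A_def n_def\<close>)
  thus ?thesis unfolding eq using card_finite_spectrum(1)[OF A] by (auto simp: spectrum_def)
qed

lemma gersh:
  fixes M :: "'a \<Rightarrow> 'a \<Rightarrow> real"
  assumes fin: "finite S" and ev: "is_eigenvalue M S \<mu>"
    and bnd: "\<forall>i\<in>S. \<alpha> \<le> M i i - (\<Sum>j\<in>S-{i}. \<bar>M i j\<bar>)"
  shows "\<alpha> \<le> \<mu>"
proof -
  obtain v where v: "\<exists>i\<in>S. v i \<noteq> 0" "\<forall>i\<in>S. (\<Sum>j\<in>S. M i j * v j) = \<mu> * v i"
    using ev unfolding is_eigenvalue_def by blast
  have ne: "S \<noteq> {}" using v(1) by auto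
  obtain i where i: "i \<in> S" "\<forall>j\<in>S. \<bar>v j\<bar> \<le> \<bar>v i\<bar>"
  proof -
    have "Max ((\<lambda>j. \<bar>v j\<bar>) ` S) \<in> (\<lambda>j. \<bar>v j\<bar>) ` S" using fin ne by (intro Max_in) auto
    then obtain i where "i \<in> S" "\<bar>v i\<bar> = Max ((\<lambda>j. \<bar>v j\<bar>) ` S)" by auto
    thus ?thesis using that fin by (metis Max_ge finite_imageI image_eqI)
  qed
  have vi: "\<bar>v i\<bar> > 0" using v(1) i(2) by force
  have "\<mu> * v i = M i i * v i + (\<Sum>j\<in>S-{i}. M i j * v j)"
    using v(2) i(1) sum.remove[OF fin i(1), of "\<lambda>j. M i j * v j"] by simp
  hence "(\<mu> - M i i) * v i = (\<Sum>j\<in>S-{i}. M i j * v j)" by (simp add: algebra_simps)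
  hence "\<bar>\<mu> - M i i\<bar> * \<bar>v i\<bar> = \<bar>\<Sum>j\<in>S-{i}. M i j * v j\<bar>" by (metis abs_mult)
  also have "\<dots> \<le> (\<Sum>j\<in>S-{i}. \<bar>M i j\<bar> * \<bar>v j\<bar>)"
    by (rule order_trans[OF sum_abs]) (simp add: abs_mult)
  also have "\<dots> \<le> (\<Sum>j\<in>S-{i}. \<bar>M i j\<bar> * \<bar>v i\<bar>)"
    by (rule sum_mono) (use i(2) in \<open>auto intro: mult_left_mono\<close>)
  also have "\<dots> = (\<Sum>j\<in>S-{i}. \<bar>M i j\<bar>) * \<bar>v i\<bar>" by (simp add: sum_distrib_right)
  finally have "\<bar>\<mu> - M i i\<bar> \<le> (\<Sum>j\<in>S-{i}. \<bar>M i j\<bar>)" using vi by simp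
  thus ?thesis using bnd i(1) by force
qed

lemma lmin_ge:
  fixes M :: "'a \<Rightarrow> 'a \<Rightarrow> real"
  assumes fin: "finite S" and ne: "S \<noteq> {}" and sym: "\<forall>i\<in>S. \<forall>j\<in>S. M i j = M j i"
    and bnd: "\<forall>i\<in>S. \<alpha> \<le> M i i - (\<Sum>j\<in>S-{i}. \<bar>M i j\<bar>)"
  shows "\<alpha> \<le> Min {\<mu>. is_eigenvalue M S \<mu>}"
proof -
  from eig_fin_ne[OF fin ne sym] have f: "finite {\<mu>. is_eigenvalue M S \<mu>}"
    and n: "{\<mu>. is_eigenvalue M S \<mu>} \<noteq> {}" by auto
  show ?thesis using Min_in[OF f n] gersh[OF fin _ bnd] by blast
qed




lemma induced_simps[simp]:
  "hV (induced H U) = U" "hE (induced H U) x y = (hE H x y \<and> x\<in>U \<and> y\<in>U)"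
  "hF (induced H U) = hF H \<inter> U"
  by (simp_all add: induced_def)

lemma slim_induced: "slim (induced H U) = U - hF H"
  by (auto simp: slim_def)

lemma fat_nbrs_induced: "x \<in> U \<Longrightarrow> hF H \<subseteq> U \<Longrightarrow> fat_nbrs (induced H U) x = fat_nbrs H x"
  by (auto simp: fat_nbrs_def)

lemma Bmat_induced: "x \<in> U \<Longrightarrow> y \<in> U \<Longrightarrow> hF H \<subseteq> U \<Longrightarrow> Bmat (induced H U) x y = Bmat H x y"
  by (simp add: Bmat_def fat_nbrs_induced)

lemma hoff_induced:
  assumes h: "hoffman_graph H" and U: "U \<subseteq> hV H" and f: "\<forall>f\<in>hF H \<inter> U. \<exists>s\<in>U - hF H. hE H f s"
  shows "hoffman_graph (induced H U)"
proof -
  from h have h1: "finite (hV H)" "\<forall>x y. hE H x y \<longrightarrow> hE H y x" "\<forall>x. \<not> hE H x x"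
    "\<forall>f\<in>hF H. \<forall>g\<in>hF H. \<not> hE H f g" unfolding hoffman_graph_def by blast+
  have "finite U" using h1(1) U finite_subset by blast
  thus ?thesis unfolding hoffman_graph_def slim_induced induced_simps
    using h1(2-4) f by blast
qed

lemma induced_sub_induced:
  "hoffman_graph (induced H U) \<Longrightarrow> U \<subseteq> hV H \<Longrightarrow> induced_sub (induced H U) H"
  by (simp add: induced_sub_def)

lemma Bmat_sym: "hoffman_graph H \<Longrightarrow> Bmat H x y = Bmat H y x"
proof -
  assume "hoffman_graph H"
  hence "hE H x y = hE H y x" unfolding hoffman_graph_def by blast
  thus ?thesis unfolding Bmat_def by (simp add: Int_commute)
qed

lemma sum_ind: "finite A \<Longrightarrow> (\<Sum>x\<in>A. if P x then 1 else 0) = real (card {x\<in>A. P x})"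
proof -
  assume "finite A"
  moreover have "A \<inter> Collect P = {x\<in>A. P x}" by auto
  ultimately show ?thesis by (simp add: sum.If_cases)
qed


theorem mainTheorem1:
  fixes G :: "'a hgraph" and k :: nat
  assumes "hoffman_graph G"
    and "hF G = {}"
    and "card (hV G) \<ge> 2"
    and "k = max_degree G"
  shows "reducible (- real k) G"
proof -
  define V where "V = hV G"
  define E where "E = hE G"
  have finV: "finite V" using assms(1) unfolding hoffman_graph_def V_def by blast
  have Ein: "\<And>x y. E x y \<Longrightarrow> x \<in> V \<and> y \<in> V" using assms(1) unfolding hoffman_graph_def V_def E_def by blast
  have Esym: "\<And>x y. E x y \<Longrightarrow> E y x" using assms(1) unfolding hoffman_graph_def E_def by blast
  have Eirr: "\<And>x. \<not> E x x" using assms(1) unfolding hoffman_graph_def E_def by blast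
  have slimG: "slim G = V" using assms(2) by (simp add: slim_def V_def)
  have fatG: "fat_nbrs G x = {}" for x using assms(2) by (simp add: fat_nbrs_def)
  have deg_eq: "Defs.degree G a = card {b\<in>V. E a b}" for a by (simp add: Defs.degree_def V_def E_def)
  have degk: "card {b\<in>V. E a b} \<le> k" if "a \<in> V" for a
  proof -
    have "Defs.degree G a \<le> k" using assms(4) finV that unfolding max_degree_def V_def by (auto intro: Max_ge)
    thus ?thesis by (simp add: deg_eq)
  qed
  have Vne: "V \<noteq> {}" using assms(3) by (auto simp: V_def)
  then obtain v where v: "v \<in> V" by blast
  have "\<not> V \<subseteq> {v}"
  proof
    assume "V \<subseteq> {v}"
    hence "card V \<le> 1" using card_mono[of "{v}" V] by simp
    with assms(3) show False by (simp add: V_def)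
  qed
  then obtain w0 where w0: "w0 \<in> V" "w0 \<noteq> v" by blast
  have BG: "Bmat G x y = (if E x y then 1 else 0)" for x y by (simp add: Bmat_def fatG E_def)
  have lamG: "- real k \<le> lambda_min G"
    unfolding lambda_min_def slimG
  proof (rule lmin_ge[OF finV Vne])
    show "\<forall>i\<in>V. \<forall>j\<in>V. Bmat G i j = Bmat G j i" using Esym by (auto simp: BG)
    show "\<forall>i\<in>V. - real k \<le> Bmat G i i - (\<Sum>j\<in>V - {i}. \<bar>Bmat G i j\<bar>)"
    proof
      fix i assume i: "i \<in> V"
      have "(\<Sum>j\<in>V - {i}. \<bar>Bmat G i j\<bar>) = (\<Sum>j\<in>V - {i}. if E i j then 1 else 0)"
        by (simp add: BG)
      also have "\<dots> = real (card {j\<in>V-{i}. E i j})" using finV by (simp add: sum_ind)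
      also have "{j\<in>V-{i}. E i j} = {j\<in>V. E i j}" using Eirr by auto
      finally show "- real k \<le> Bmat G i i - (\<Sum>j\<in>V - {i}. \<bar>Bmat G i j\<bar>)"
        using degk[OF i] Eirr by (simp add: BG)
    qed
  qed
  define N where "N = {w\<in>V. E v w}"
  have finN: "finite N" using finV unfolding N_def by simp
  have NV: "N \<subseteq> V" unfolding N_def by auto
  have Nv: "v \<notin> N" using Eirr unfolding N_def by auto
  obtain g :: "'a \<Rightarrow> nat" where g: "inj_on g N" using finite_imp_inj_to_nat_seg[OF finN] by blast
  define fv where "fv w = (Inr (g w) :: 'a + nat)" for w
  have fv_inj: "fv w = fv u \<longleftrightarrow> w = u" if "w\<in>N" "u\<in>N" for w u
    using g that unfolding fv_def by (auto dest: inj_onD)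
  have fv_Inl[simp]: "fv w \<noteq> Inl a" "Inl a \<noteq> fv w" for w a by (auto simp: fv_def)
  define F where "F = fv ` N"
  have Inl_F[simp]: "Inl a \<notin> F" for a unfolding F_def by auto
  define E' where "E' x y = ((\<exists>a b. x = Inl a \<and> y = Inl b \<and> E a b) \<or>
     (\<exists>w\<in>N. (x = fv w \<and> (y = Inl v \<or> y = Inl w)) \<or> (y = fv w \<and> (x = Inl v \<or> x = Inl w))))" for x y
  define H' where "H' = \<lparr>hV = Inl ` V \<union> F, hE = E', hF = F\<rparr>"
  have H'_simps[simp]: "hV H' = Inl ` V \<union> F" "hE H' = E'" "hF H' = F" by (simp_all add: H'_def)
  have E'_ll[simp]: "E' (Inl a) (Inl b) \<longleftrightarrow> E a b" for a b by (auto simp: E'_def)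
  have E'_lf: "E' (Inl a) (fv u) \<longleftrightarrow> (a = v \<or> a = u)" if "u \<in> N" for a u
    using that fv_inj by (auto simp: E'_def)
  have E'_fl: "E' (fv u) (Inl a) \<longleftrightarrow> (a = v \<or> a = u)" if "u \<in> N" for a u
    using that fv_inj by (auto simp: E'_def)
  have E'_ff: "\<not> E' (fv u) (fv w)" for u w by (auto simp: E'_def fv_def)
  have E'_sym: "E' x y \<Longrightarrow> E' y x" for x y unfolding E'_def using Esym by blast
  have hH': "hoffman_graph H'"
    unfolding hoffman_graph_def H'_simps
  proof (intro conjI)
    show "finite (Inl ` V \<union> F)" using finV finN by (simp add: F_def)
    show "F \<subseteq> Inl ` V \<union> F" by blast
    show "\<forall>x y. E' x y \<longrightarrow> x \<in> Inl ` V \<union> F \<and> y \<in> Inl ` V \<union> F"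
      unfolding E'_def F_def using Ein NV v by blast
    show "\<forall>x y. E' x y \<longrightarrow> E' y x" using E'_sym by blast
    show "\<forall>x. \<not> E' x x" unfolding E'_def using Eirr by auto
    show "\<forall>f\<in>F. \<exists>s\<in>slim H'. E' f s"
    proof
      fix f assume "f \<in> F"
      then obtain u where u: "u \<in> N" "f = fv u" unfolding F_def by blast
      have "Inl v \<in> slim H'" using v by (simp add: slim_def)
      moreover have "E' f (Inl v)" using u E'_fl by simp
      ultimately show "\<exists>s\<in>slim H'. E' f s" by blast
    qed
    show "\<forall>f\<in>F. \<forall>g\<in>F. \<not> E' f g" unfolding F_def using E'_ff by blast
  qed
  define U1 where "U1 = insert (Inl v) F"
  define U2 where "U2 = Inl ` (V - {v}) \<union> F"
  define H1 where "H1 = induced H' U1"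
  define H2 where "H2 = induced H' U2"
  have U1s: "U1 \<subseteq> hV H'" using v by (auto simp: U1_def)
  have U2s: "U2 \<subseteq> hV H'" by (auto simp: U2_def)
  have hH1: "hoffman_graph H1" unfolding H1_def
  proof (rule hoff_induced[OF hH' U1s])
    show "\<forall>f\<in>hF H' \<inter> U1. \<exists>s\<in>U1 - hF H'. hE H' f s"
    proof
      fix f assume "f \<in> hF H' \<inter> U1"
      then obtain u where u: "u \<in> N" "f = fv u" by (auto simp: F_def)
      have "Inl v \<in> U1 - hF H'" by (simp add: U1_def)
      moreover have "E' f (Inl v)" using u E'_fl by simp
      ultimately show "\<exists>s\<in>U1 - hF H'. hE H' f s" by auto
    qed
  qed
  have hH2: "hoffman_graph H2" unfolding H2_def
  proof (rule hoff_induced[OF hH' U2s])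
    show "\<forall>f\<in>hF H' \<inter> U2. \<exists>s\<in>U2 - hF H'. hE H' f s"
    proof
      fix f assume "f \<in> hF H' \<inter> U2"
      then obtain u where u: "u \<in> N" "f = fv u" by (auto simp: F_def)
      have "Inl u \<in> U2 - hF H'" using u NV Nv by (auto simp: U2_def)
      moreover have "E' f (Inl u)" using u E'_fl by simp
      ultimately show "\<exists>s\<in>U2 - hF H'. hE H' f s" by auto
    qed
  qed
  have hmapG: "hmap Inl G = induced H' (Inl ` V)"
  proof -
    have "(\<lambda>x y. \<exists>a b. x = Inl a \<and> y = Inl b \<and> hE G a b) = (\<lambda>x y. E' x y \<and> x \<in> Inl ` V \<and> y \<in> Inl ` V)"
    proof (intro ext)
      fix x y
      show "(\<exists>a b. x = Inl a \<and> y = Inl b \<and> hE G a b) = (E' x y \<and> x \<in> Inl ` V \<and> y \<in> Inl ` V)"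
        using Ein by (auto simp: E_def)
    qed
    moreover have "F \<inter> Inl ` V = {}" by auto
    ultimately show ?thesis unfolding hmap_def induced_def using assms(2) V_def by simp
  qed
  have hG': "induced_sub (hmap Inl G) H'" unfolding hmapG
  proof (rule induced_sub_induced)
    show "Inl ` V \<subseteq> hV H'" by simp
    show "hoffman_graph (induced H' (Inl ` V))" by (rule hoff_induced[OF hH']) auto
  qed
  have slimHG: "slim (hmap Inl G) = Inl ` V" by (simp add: slim_def hmap_def assms(2) V_def)
  have slimH1: "slim H1 = {Inl v}" unfolding H1_def slim_induced by (auto simp: U1_def)
  have slimH2: "slim H2 = Inl ` (V - {v})" unfolding H2_def slim_induced by (auto simp: U2_def)
  have fn_v: "fat_nbrs H' (Inl v) = F" using E'_lf by (auto simp: fat_nbrs_def F_def)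
  have fn_a: "fat_nbrs H' (Inl a) = fv ` {w\<in>N. w = a}" if "a \<noteq> v" for a
    using E'_lf that by (auto simp: fat_nbrs_def F_def)
  have card_fa: "card (fv ` {w\<in>N. w = a}) = (if a \<in> N then 1 else 0)" for a
  proof (cases "a \<in> N")
    case True
    hence "{w\<in>N. w = a} = {a}" by auto
    thus ?thesis using True by simp
  next
    case False
    hence "{w\<in>N. w = a} = {}" by auto
    thus ?thesis using False by simp
  qed
  have fa_sub: "fv ` {w\<in>N. w = a} \<subseteq> F" for a unfolding F_def by auto
  have cross: "card (fat_nbrs H' (Inl v) \<inter> fat_nbrs H' (Inl b)) = (if E v b then 1 else 0)"
    if "b \<in> V" "b \<noteq> v" for b
  proof -
    have "fat_nbrs H' (Inl v) \<inter> fat_nbrs H' (Inl b) = fv ` {w\<in>N. w = b}"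
      using fn_v fn_a[OF that(2)] fa_sub by auto
    thus ?thesis using card_fa that unfolding N_def by simp
  qed
  have fnF: "fat_nbrs H' x \<subseteq> F" for x by (auto simp: fat_nbrs_def)
  have c12: "\<forall>x\<in>slim H1. \<forall>y\<in>slim H2. card (fat_nbrs H' x \<inter> fat_nbrs H' y) \<le> 1 \<and>
      (card (fat_nbrs H' x \<inter> fat_nbrs H' y) = 1 \<longleftrightarrow> hE H' x y)"
    unfolding slimH1 slimH2 using cross by auto
  have c21: "\<forall>x\<in>slim H2. \<forall>y\<in>slim H1. card (fat_nbrs H' x \<inter> fat_nbrs H' y) \<le> 1 \<and>
      (card (fat_nbrs H' x \<inter> fat_nbrs H' y) = 1 \<longleftrightarrow> hE H' x y)"
    unfolding slimH1 slimH2 using cross Esym by (auto simp: Int_commute)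
  have dec: "decomposition H' {1::nat,2} (\<lambda>i. if i = 1 then H1 else H2)"
    unfolding decomposition_def
  proof (intro conjI)
    show "finite {1::nat,2}" by simp
    show "\<forall>i\<in>{1::nat,2}. induced_sub (if i = 1 then H1 else H2) H'"
    proof -
      have "induced_sub H1 H'" unfolding H1_def by (rule induced_sub_induced[OF hH1[unfolded H1_def] U1s])
      moreover have "induced_sub H2 H'" unfolding H2_def by (rule induced_sub_induced[OF hH2[unfolded H2_def] U2s])
      ultimately show ?thesis by simp
    qed
    show "hV H' = (\<Union>i\<in>{1::nat,2}. hV (if i=1 then H1 else H2))"
      using v by (auto simp: H1_def H2_def U1_def U2_def)
    show "\<forall>i\<in>{1::nat,2}. \<forall>j\<in>{1::nat,2}. i \<noteq> j \<longrightarrow>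
        slim (if i=1 then H1 else H2) \<inter> slim (if j=1 then H1 else H2) = {}"
      using slimH1 slimH2 by auto
    show "\<forall>i\<in>{1::nat,2}. \<forall>x\<in>slim (if i=1 then H1 else H2). fat_nbrs H' x \<subseteq> hV (if i=1 then H1 else H2)"
      using fnF by (auto simp: H1_def H2_def U1_def U2_def)
    show "\<forall>i\<in>{1::nat,2}. \<forall>j\<in>{1::nat,2}. i \<noteq> j \<longrightarrow>
        (\<forall>x\<in>slim (if i=1 then H1 else H2). \<forall>y\<in>slim (if j=1 then H1 else H2).
         card (fat_nbrs H' x \<inter> fat_nbrs H' y) \<le> 1 \<and>
         (card (fat_nbrs H' x \<inter> fat_nbrs H' y) = 1 \<longleftrightarrow> hE H' x y))"
      using c12 c21 by auto
  qed
  have injfv: "inj_on fv N" using fv_inj by (auto intro: inj_onI)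
  have lam1: "- real k \<le> lambda_min H1" unfolding lambda_min_def slimH1
  proof (rule lmin_ge)
    have "Bmat H1 (Inl v) (Inl v) = Bmat H' (Inl v) (Inl v)" unfolding H1_def
      by (rule Bmat_induced) (auto simp: U1_def)
    also have "\<dots> = - real (card F)" by (simp add: Bmat_def fn_v Eirr)
    also have "card F = card N" unfolding F_def using injfv by (rule card_image)
    finally show "\<forall>i\<in>{Inl v}. - real k \<le> Bmat H1 i i - (\<Sum>j\<in>{Inl v} - {i}. \<bar>Bmat H1 i j\<bar>)"
      using degk[OF v] by (simp add: N_def)
  qed auto
  have lam2: "- real k \<le> lambda_min H2" unfolding lambda_min_def slimH2
  proof (rule lmin_ge)
    show "finite (Inl ` (V - {v}))" using finV by simp
    show "Inl ` (V - {v}) \<noteq> {}" using w0 by auto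
    show "\<forall>i\<in>Inl ` (V - {v}). \<forall>j\<in>Inl ` (V - {v}). Bmat H2 i j = Bmat H2 j i"
      using Bmat_sym[OF hH2] by blast
    show "\<forall>i\<in>Inl ` (V - {v}). - real k \<le> Bmat H2 i i - (\<Sum>j\<in>Inl ` (V - {v}) - {i}. \<bar>Bmat H2 i j\<bar>)"
    proof
      fix i :: "'a + nat" assume "i \<in> Inl ` (V - {v})"
      then obtain a where a: "i = Inl a" "a \<in> V" "a \<noteq> v" by auto
      have BH2: "Bmat H2 (Inl a) (Inl b) = (if E a b then 1 else 0) - real (card (fv ` {w\<in>N. w = a} \<inter> fv ` {w\<in>N. w = b}))"
        if "b \<in> V" "b \<noteq> v" for b
      proof -
        have "Bmat H2 (Inl a) (Inl b) = Bmat H' (Inl a) (Inl b)" unfolding H2_def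
          by (rule Bmat_induced) (use a that in \<open>auto simp: U2_def\<close>)
        thus ?thesis by (simp add: Bmat_def fn_a a(3) that(2))
      qed
      have diag: "Bmat H2 (Inl a) (Inl a) = - (if a \<in> N then 1 else 0)"
        using BH2[OF a(2,3)] card_fa[of a] Eirr by simp
      have off: "\<bar>Bmat H2 (Inl a) (Inl b)\<bar> = (if E a b then 1 else 0)" if "b \<in> V - {v} - {a}" for b
      proof -
        have "fv ` {w\<in>N. w = a} \<inter> fv ` {w\<in>N. w = b} = {}" using fv_inj that by auto
        thus ?thesis using BH2[of b] that by simp
      qed
      have "(Inl ` (V - {v}) - {Inl a} :: ('a + nat) set) = Inl ` (V - {v} - {a})" by auto
      hence "(\<Sum>j\<in>Inl ` (V - {v}) - {i}. \<bar>Bmat H2 i j\<bar>) = (\<Sum>b\<in>V - {v} - {a}. \<bar>Bmat H2 (Inl a) (Inl b)\<bar>)"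
        unfolding a(1) by (simp add: sum.reindex)
      also have "\<dots> = (\<Sum>b\<in>V - {v} - {a}. if E a b then 1 else 0)" by (rule sum.cong) (use off in auto)
      also have "\<dots> = real (card {b\<in>V - {v} - {a}. E a b})" using finV by (simp add: sum_ind)
      also have "{b\<in>V - {v} - {a}. E a b} = {b\<in>V. E a b} - {v}" using Eirr by auto
      finally have S: "(\<Sum>j\<in>Inl ` (V - {v}) - {i}. \<bar>Bmat H2 i j\<bar>) = real (card ({b\<in>V. E a b} - {v}))" .
      define D where "D = {b\<in>V. E a b}"
      have finD: "finite D" using finV by (simp add: D_def)
      have Dk: "card D \<le> k" using degk[OF a(2)] by (simp add: D_def)
      have aN: "a \<in> N \<longleftrightarrow> v \<in> D" using Esym a v by (auto simp: N_def D_def)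
      show "- real k \<le> Bmat H2 i i - (\<Sum>j\<in>Inl ` (V - {v}) - {i}. \<bar>Bmat H2 i j\<bar>)"
      proof (cases "v \<in> D")
        case True
        have "card D > 0" using True finD card_gt_0_iff by blast
        hence "real (card (D - {v})) = real (card D) - 1" using True finD by (simp add: card_Diff_singleton of_nat_diff)
        thus ?thesis using S[folded D_def] diag a(1) True aN Dk by simp
      next
        case False
        hence "D - {v} = D" by simp
        thus ?thesis using S[folded D_def] diag a(1) False aN Dk by simp
      qed
    qed
  qed
  show ?thesis unfolding reducible_def
  proof (intro conjI exI)
    show "- real k \<le> lambda_min G" by (rule lamG)
    show "hoffman_graph H'" by (rule hH')
    show "induced_sub (hmap Inl G) H'" by (rule hG')
    show "decomposition H' {1::nat,2} (\<lambda>i. if i = 1 then H1 else H2)" by (rule dec)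
    show "- real k \<le> lambda_min H1" by (rule lam1)
    show "- real k \<le> lambda_min H2" by (rule lam2)
    show "slim H1 \<inter> slim (hmap Inl G) \<noteq> {}" using slimH1 slimHG v by auto
    show "slim H2 \<inter> slim (hmap Inl G) \<noteq> {}" using slimH2 slimHG w0 by auto
  qed
qed

end
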